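(* Consider the recursive network formation model with the utility function described in the context. If $$c<b_1-b_2 \quad\text{and}\quad c_0\le(1-\gamma)b_2,$$ then the resulting topology is a complete graph: starting from a single node, for every $n\ge1$, the pairwise stable network reached after the $n$-th node has entered is the complete graph on $n$ nodes, irrespective of the random order in which nodes are selected to move.
   Context: Networks are finite simple undirected graphs whose vertices (nodes) are self-interested agents. Parameters: benefits $b_1>b_2>b_3>b_4>\dots>0$, where $b_i$ is the benefit a node obtains from a node at distance $i$; a link cost $c$ per immediate neighbor; an intermediation fraction $\gamma$ with $0\le\gamma<1$; and a network entry factor $c_0$. Notation: $N$ is the set of nodes currently in the network, $d_j$ the degree of $j$, and $l(j,w)$ the graph distance. A node $x$ is essential for a pair $y,z$ (with $x\notin\{y,z\}$) if $x$ lies on every path joining $y$ and $z$. Write $E(y,z)$ for the set of nodes essential for $y,z$ and $e(y,z)=|E(y,z)|$. Only pairs joined by a path contribute to the sums below. Utility of node $j$ in network $g$: $$u_j(g)=-c_0\,d_{T(j)}\mathbf 1_{\{j=\mathrm{NE}\}}+d_j(b_1-c)+\sum_{w\in N,\ l(j,w)>1}b_{l(j,w)}-\sum_{w\in N,\ E(j,w)\ne\emptyset}\gamma\, b_{l(j,w)}+\sum_{y,z\in N,\ j\in E(y,z)}\frac{\gamma}{e(y,z)}\,2\,b_{l(y,z)}.$$ Here $\mathbf 1_{\{j=\mathrm{NE}\}}=1$ exactly when $j$ is a newly entering node evaluating the creation of its first link. $T(j)$ is the existing node to which $j$ forms that first link, and $d_{T(j)}$ is that node's degree before the link. The network before entry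 gives the entering node utility $0$. Pairwise stability: $g$ is pairwise stable if (a) for every link $(i,j)\in g$, $u_i(g\setminus\{(i,j)\})\le u_i(g)$ and $u_j(g\setminus\{(i,j)\})\le u_j(g)$; and (b) for every non-link $(i,j)\notin g$, if $u_i(g\cup\{(i,j)\})>u_i(g)$ then $u_j(g\cup\{(i,j)\})<u_j(g)$. Recursive model of network formation: - The process starts with a single node. - When the current network of $n-1$ nodes is pairwise stable, a new node considers entering. Its options are to stay out or to propose a link to one existing node. The link forms iff the receiving node's utility does not decrease. No existing node can link to the newcomer before it has formed this first link. - After entry, nodes are repeatedly chosen at random to move. A chosen node plays a myopic best response among three options: create a link with a non-neighbor (the link forms only if the other node's utility does not decrease, which the proposer anticipates); delete a link with a neighbor (unilaterally); or keep the status quo. It alters a link only if this strictly increases its current utility. - This continues until the network is pairwise stable; then the next node considers entering, and so on. "The resulting topology is X" means: for every number $n$ of nodes, every pairwise stable network reached after the $n$-th node has entered is a network of topology X on $n$ nodes, irrespective of the random choices. *)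

theory Defs
  imports Main Complex_Main
begin

(* Networks: nodes are natural numbers; the node set is an explicit finite set N
   (in the recursive model N = {..<n}, node k being the (k+1)-th entrant).
   A network is a set of undirected edges, each edge a two-element set {x,y}. *)

definition adj :: "nat set set \<Rightarrow> nat \<Rightarrow> nat \<Rightarrow> bool" where
  "adj g x y \<longleftrightarrow> x \<noteq> y \<and> {x, y} \<in> g"

definition deg :: "nat set \<Rightarrow> nat set set \<Rightarrow> nat \<Rightarrow> nat" where
  "deg N g j = card {k \<in> N. adj g j k}"

definition is_path :: "nat set \<Rightarrow> nat set set \<Rightarrow> nat \<Rightarrow> nat \<Rightarrow> nat list \<Rightarrow> bool" where
  "is_path N g y z xs \<longleftrightarrow> xs \<noteq> [] \<and> hd xs = y \<and> last xs = z \<and> distinct xs \<and> set xs \<subseteq> N \<and>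
     (\<forall>i. Suc i < length xs \<longrightarrow> adj g (xs ! i) (xs ! Suc i))"

definition joined :: "nat set \<Rightarrow> nat set set \<Rightarrow> nat \<Rightarrow> nat \<Rightarrow> bool" where
  "joined N g y z \<longleftrightarrow> (\<exists>xs. is_path N g y z xs)"

definition gdist :: "nat set \<Rightarrow> nat set set \<Rightarrow> nat \<Rightarrow> nat \<Rightarrow> nat" where
  "gdist N g y z = (LEAST k. \<exists>xs. is_path N g y z xs \<and> length xs = Suc k)"

definition essential :: "nat set \<Rightarrow> nat set set \<Rightarrow> nat \<Rightarrow> nat \<Rightarrow> nat \<Rightarrow> bool" where
  "essential N g x y z \<longleftrightarrow> x \<in> N \<and> x \<noteq> y \<and> x \<noteq> z \<and> (\<forall>xs. is_path N g y z xs \<longrightarrow> x \<in> set xs)"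

definition ess_set :: "nat set \<Rightarrow> nat set set \<Rightarrow> nat \<Rightarrow> nat \<Rightarrow> nat set" where
  "ess_set N g y z = {x. essential N g x y z}"

(* utility u_j(g) without the entry term (the entry term is added separately
   in the entry step of the process); b i = b_i, c = link cost, gam = gamma *)
definition util :: "(nat \<Rightarrow> real) \<Rightarrow> real \<Rightarrow> real \<Rightarrow> nat set \<Rightarrow> nat set set \<Rightarrow> nat \<Rightarrow> real" where
  "util b c gam N g j =
      real (deg N g j) * (b 1 - c)
    + (\<Sum>w\<in>{w\<in>N. joined N g j w \<and> gdist N g j w > 1}. b (gdist N g j w))
    - (\<Sum>w\<in>{w\<in>N. w \<noteq> j \<and> joined N g j w \<and> ess_set N g j w \<noteq> {}}. gam * b (gdist N g j w))
    + (\<Sum>(y, z)\<in>{(y, z). y \<in> N \<and> z \<in> N \<and> y < z \<and> joined N g y z \<and> j \<in> ess_set N g y z}.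
          gam / real (card (ess_set N g y z)) * 2 * b (gdist N g y z))"

definition pairwise_stable :: "(nat \<Rightarrow> real) \<Rightarrow> real \<Rightarrow> real \<Rightarrow> nat set \<Rightarrow> nat set set \<Rightarrow> bool" where
  "pairwise_stable b c gam N g \<longleftrightarrow>
     (\<forall>i\<in>N. \<forall>k\<in>N. adj g i k \<longrightarrow>
        util b c gam N (g - {{i, k}}) i \<le> util b c gam N g i \<and>
        util b c gam N (g - {{i, k}}) k \<le> util b c gam N g k) \<and>
     (\<forall>i\<in>N. \<forall>k\<in>N. i \<noteq> k \<and> \<not> adj g i k \<longrightarrow>
        util b c gam N (insert {i, k} g) i > util b c gam N g i \<longrightarrow>
        util b c gam N (insert {i, k} g) k < util b c gam N g k)"

definition options :: "(nat \<Rightarrow> real) \<Rightarrow> real \<Rightarrow> real \<Rightarrow> nat set \<Rightarrow> nat set set \<Rightarrow> nat \<Rightarrow> nat set set set" where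
  "options b c gam N g i =
     {insert {i, k} g | k. k \<in> N \<and> k \<noteq> i \<and> \<not> adj g i k \<and>
                           util b c gam N (insert {i, k} g) k \<ge> util b c gam N g k}
   \<union> {g - {{i, k}} | k. k \<in> N \<and> adj g i k}
   \<union> {g}"

definition accepts :: "(nat \<Rightarrow> real) \<Rightarrow> real \<Rightarrow> real \<Rightarrow> nat \<Rightarrow> nat set set \<Rightarrow> nat \<Rightarrow> bool" where
  "accepts b c gam n g T \<longleftrightarrow>
     util b c gam {..<Suc n} (insert {n, T} g) T \<ge> util b c gam {..<Suc n} g T"

(* utility of the entrant n after forming its first link with T, including the
   entry term - c0 * d_T (degree of T before the link) *)
definition entry_val :: "(nat \<Rightarrow> real) \<Rightarrow> real \<Rightarrow> real \<Rightarrow> real \<Rightarrow> nat \<Rightarrow> nat set set \<Rightarrow> nat \<Rightarrow> real" where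
  "entry_val b c gam c0 n g T =
     util b c gam {..<Suc n} (insert {n, T} g) n - c0 * real (deg {..<n} g T)"

(* one step of the recursive formation process; states are (number of nodes, network) *)
inductive step :: "(nat \<Rightarrow> real) \<Rightarrow> real \<Rightarrow> real \<Rightarrow> real \<Rightarrow> nat \<times> nat set set \<Rightarrow> nat \<times> nat set set \<Rightarrow> bool"
  for b c gam c0 where
  entry: "\<lbrakk> pairwise_stable b c gam {..<n} g; T < n; accepts b c gam n g T;
            entry_val b c gam c0 n g T > 0;
            \<forall>T'<n. accepts b c gam n g T' \<longrightarrow> entry_val b c gam c0 n g T' \<le> entry_val b c gam c0 n g T \<rbrakk>
          \<Longrightarrow> step b c gam c0 (n, g) (Suc n, insert {n, T} g)"
| move: "\<lbrakk> \<not> pairwise_stable b c gam {..<n} g; i < n; g' \<in> options b c gam {..<n} g i;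
           util b c gam {..<n} g' i > util b c gam {..<n} g i;
           \<forall>g''\<in>options b c gam {..<n} g i. util b c gam {..<n} g'' i \<le> util b c gam {..<n} g' i \<rbrakk>
          \<Longrightarrow> step b c gam c0 (n, g) (n, g')"

definition complete_graph :: "nat \<Rightarrow> nat set set" where
  "complete_graph n = {{x, y} | x y. x < n \<and> y < n \<and> x \<noteq> y}"

end

theory Submission
  imports Defs
begin

lemma adj_sym: "adj g x y = adj g y x"
  unfolding adj_def by (auto simp: insert_commute)

lemma path_mono:
  assumes "is_path N g y z xs" "\<And>u v. adj g u v \<Longrightarrow> adj g' u v"
  shows "is_path N g' y z xs"
  using assms unfolding is_path_def by blast

lemma joined_mono:
  assumes "joined N g y z" "\<And>u v. adj g u v \<Longrightarrow> adj g' u v"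
  shows "joined N g' y z"
  using assms path_mono unfolding joined_def by blast

lemma gdist_ex:
  assumes "joined N g y z"
  shows "\<exists>xs. is_path N g y z xs \<and> length xs = Suc (gdist N g y z)"
proof -
  from assms obtain xs where p: "is_path N g y z xs" unfolding joined_def by blast
  then have "xs \<noteq> []" unfolding is_path_def by auto
  then obtain m where "length xs = Suc m" by (cases xs) auto
  with p have "\<exists>k xs. is_path N g y z xs \<and> length xs = Suc k" by blast
  then show ?thesis unfolding gdist_def by (rule LeastI_ex)
qed

lemma gdist_le:
  assumes "is_path N g y z xs" "length xs = Suc m"
  shows "gdist N g y z \<le> m"
  unfolding gdist_def using assms by (intro Least_le) blast

lemma gdist_ge1:
  assumes "joined N g y z" "y \<noteq> z"
  shows "gdist N g y z \<ge> 1"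
proof (rule ccontr)
  assume "\<not> ?thesis"
  then have "gdist N g y z = 0" by simp
  with gdist_ex[OF assms(1)] obtain xs where "is_path N g y z xs" "length xs = 1" by auto
  then show False using assms(2) unfolding is_path_def
    by (metis One_nat_def hd_conv_nth last_conv_nth diff_Suc_1 length_0_conv zero_neq_one)
qed

lemma gdist_ge2:
  assumes "joined N g y z" "y \<noteq> z" "\<not> adj g y z"
  shows "gdist N g y z \<ge> 2"
proof (rule ccontr)
  assume "\<not> ?thesis"
  with gdist_ge1[OF assms(1,2)] have "gdist N g y z = 1" by simp
  with gdist_ex[OF assms(1)] obtain xs where p: "is_path N g y z xs" "length xs = 2" by auto
  then have "xs ! 0 = y" "xs ! 1 = z" unfolding is_path_def
    by (auto simp: hd_conv_nth last_conv_nth)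
  moreover have "adj g (xs ! 0) (xs ! Suc 0)" using p unfolding is_path_def by auto
  ultimately show False using assms(3) by simp
qed

lemma path_edge:
  assumes "adj g y z" "y \<in> N" "z \<in> N"
  shows "is_path N g y z [y, z]"
  using assms unfolding is_path_def adj_def by (auto simp: less_Suc_eq)

lemma adj_joined: "adj g y z \<Longrightarrow> y \<in> N \<Longrightarrow> z \<in> N \<Longrightarrow> joined N g y z"
  using path_edge unfolding joined_def by blast

lemma adj_gdist:
  assumes "adj g y z" "y \<in> N" "z \<in> N"
  shows "gdist N g y z = 1"
proof -
  have "gdist N g y z \<le> 1" using gdist_le[OF path_edge[OF assms]] by simp
  moreover have "y \<noteq> z" using assms(1) unfolding adj_def by simp
  ultimately show ?thesis using gdist_ge1[OF adj_joined[OF assms]] by simp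
qed

lemma adj_ess:
  assumes "adj g y z" "y \<in> N" "z \<in> N"
  shows "ess_set N g y z = {}"
  using path_edge[OF assms] unfolding ess_set_def essential_def by fastforce

lemma gdist_self:
  assumes "j \<in> N" shows "gdist N g j j = 0"
proof -
  have "is_path N g j j [j]" using assms unfolding is_path_def by auto
  from gdist_le[OF this] show ?thesis by simp
qed

lemma gdist_mono:
  assumes "joined N g y z" "\<And>u v. adj g u v \<Longrightarrow> adj g' u v"
  shows "gdist N g' y z \<le> gdist N g y z"
proof -
  from gdist_ex[OF assms(1)] obtain xs where "is_path N g y z xs" "length xs = Suc (gdist N g y z)" by blast
  then show ?thesis using gdist_le path_mono[OF _ assms(2)] by blast
qed

lemma ess_mono:
  assumes "\<And>u v. adj g u v \<Longrightarrow> adj g' u v"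
  shows "ess_set N g' y z \<subseteq> ess_set N g y z"
  using path_mono[OF _ assms] unfolding ess_set_def essential_def by blast

lemma ess_finite: "finite N \<Longrightarrow> finite (ess_set N g y z)"
  unfolding ess_set_def essential_def by (rule finite_subset[of _ N]) auto

lemma ess_keep:
  assumes "j \<in> ess_set N g y z"
  shows "j \<in> ess_set N (insert {j, k} g) y z"
proof -
  have "j \<in> set xs" if p: "is_path N (insert {j, k} g) y z xs" for xs
  proof (cases "\<forall>i. Suc i < length xs \<longrightarrow> adj g (xs ! i) (xs ! Suc i)")
    case True
    then have "is_path N g y z xs" using p unfolding is_path_def by auto
    then show ?thesis using assms unfolding ess_set_def essential_def by auto
  next
    case False
    then obtain i where i: "Suc i < length xs" "\<not> adj g (xs ! i) (xs ! Suc i)" by auto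
    then have "adj (insert {j, k} g) (xs ! i) (xs ! Suc i)" using p unfolding is_path_def by auto
    with i have "{xs ! i, xs ! Suc i} = {j, k}" unfolding adj_def by auto
    then have "j = xs ! i \<or> j = xs ! Suc i" by (metis doubleton_eq_iff)
    then show ?thesis using i(1) by (metis Suc_lessD nth_mem)
  qed
  then show ?thesis using assms unfolding ess_set_def essential_def by auto
qed

definition fcontr :: "(nat \<Rightarrow> real) \<Rightarrow> real \<Rightarrow> real \<Rightarrow> nat set \<Rightarrow> nat set set \<Rightarrow> nat \<Rightarrow> nat \<Rightarrow> real" where
  "fcontr b c gam N g j w = (if w = j then 0 else if adj g j w then b 1 - c
     else if joined N g j w then (if ess_set N g j w \<noteq> {} then (1 - gam) * b (gdist N g j w)
       else b (gdist N g j w)) else 0)"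

definition Cterm :: "(nat \<Rightarrow> real) \<Rightarrow> real \<Rightarrow> nat set \<Rightarrow> nat set set \<Rightarrow> nat \<Rightarrow> real" where
  "Cterm b gam N g j = (\<Sum>(y, z)\<in>{(y, z). y \<in> N \<and> z \<in> N \<and> y < z \<and> joined N g y z \<and> j \<in> ess_set N g y z}.
          gam / real (card (ess_set N g y z)) * 2 * b (gdist N g y z))"

lemma util_split:
  assumes "finite N" "j \<in> N"
  shows "util b c gam N g j = (\<Sum>w\<in>N. fcontr b c gam N g j w) + Cterm b gam N g j"
proof -
  have d: "real (deg N g j) = (\<Sum>w\<in>N. if adj g j w then 1 else 0)"
    unfolding deg_def using assms(1) by (simp add: sum.inter_filter[symmetric])
  have A: "(\<Sum>w\<in>{w\<in>N. joined N g j w \<and> gdist N g j w > 1}. b (gdist N g j w))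
      = (\<Sum>w\<in>N. if joined N g j w \<and> gdist N g j w > 1 then b (gdist N g j w) else 0)"
    using assms(1) by (rule sum.inter_filter)
  have B: "(\<Sum>w\<in>{w\<in>N. w \<noteq> j \<and> joined N g j w \<and> ess_set N g j w \<noteq> {}}. gam * b (gdist N g j w))
      = (\<Sum>w\<in>N. if w \<noteq> j \<and> joined N g j w \<and> ess_set N g j w \<noteq> {} then gam * b (gdist N g j w) else 0)"
    using assms(1) by (rule sum.inter_filter)
  have pw: "(if adj g j w then 1 else 0) * (b 1 - c)
      + (if joined N g j w \<and> gdist N g j w > 1 then b (gdist N g j w) else 0)
      - (if w \<noteq> j \<and> joined N g j w \<and> ess_set N g j w \<noteq> {} then gam * b (gdist N g j w) else 0)
      = fcontr b c gam N g j w" if w: "w \<in> N" for w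
  proof -
    consider "w = j" | "w \<noteq> j" "adj g j w" | "w \<noteq> j" "\<not> adj g j w" "joined N g j w"
      | "w \<noteq> j" "\<not> adj g j w" "\<not> joined N g j w" by blast
    then show ?thesis
    proof cases
      case 1 then show ?thesis using gdist_self[OF assms(2)] unfolding fcontr_def adj_def by simp
    next
      case 2 then show ?thesis using adj_gdist[OF _ assms(2) w] adj_ess[OF _ assms(2) w]
          unfolding fcontr_def by simp
    next
      case 3 then have "gdist N g j w \<ge> 2" using gdist_ge2 by metis
      with 3 show ?thesis unfolding fcontr_def by (simp add: algebra_simps)
    next
      case 4 then show ?thesis unfolding fcontr_def by simp
    qed
  qed
  have "real (deg N g j) * (b 1 - c)
    + (\<Sum>w\<in>N. if joined N g j w \<and> gdist N g j w > 1 then b (gdist N g j w) else 0)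
    - (\<Sum>w\<in>N. if w \<noteq> j \<and> joined N g j w \<and> ess_set N g j w \<noteq> {} then gam * b (gdist N g j w) else 0)
    = (\<Sum>w\<in>N. (if adj g j w then 1 else 0) * (b 1 - c)
      + (if joined N g j w \<and> gdist N g j w > 1 then b (gdist N g j w) else 0)
      - (if w \<noteq> j \<and> joined N g j w \<and> ess_set N g j w \<noteq> {} then gam * b (gdist N g j w) else 0))"
    unfolding d by (simp add: sum_distrib_right sum_subtractf sum.distrib)
  also have "\<dots> = (\<Sum>w\<in>N. fcontr b c gam N g j w)"
    by (rule sum.cong[OF refl pw])
  finally show ?thesis
    unfolding util_def Cterm_def A B by simp
qed

lemma b_anti:
  assumes "\<forall>i\<ge>1. b (Suc i) < (b i :: real)" "1 \<le> m" "m \<le> n"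
  shows "b n \<le> b m"
  using assms(3)
proof (induction n rule: dec_induct)
  case base then show ?case by simp
next
  case (step n) then show ?case using assms(1,2) by (meson le_trans less_imp_le order_trans)
qed

lemma add_increase:
  fixes b :: "nat \<Rightarrow> real"
  assumes b_decr: "\<forall>i\<ge>1. b (Suc i) < b i"
    and b_pos: "\<forall>i\<ge>1. 0 < b i"
    and gam: "0 \<le> gam" "gam < 1"
    and hc: "c < b 1 - b 2"
    and N: "finite N" "j \<in> N" "k \<in> N" "j \<noteq> k" "\<not> adj g j k"
  shows "util b c gam N g j < util b c gam N (insert {j, k} g) j"
proof -
  define g' where "g' = insert {j, k} g"
  have am: "\<And>u v. adj g u v \<Longrightarrow> adj g' u v" unfolding g'_def adj_def by auto
  have adjg': "adj g' j w = adj g j w" if "w \<noteq> k" for w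
    using that unfolding g'_def adj_def by (auto simp: doubleton_eq_iff)
  have adjk: "adj g' j k" unfolding g'_def adj_def using N by auto
  have banti: "\<And>m n. 1 \<le> m \<Longrightarrow> m \<le> n \<Longrightarrow> b n \<le> b m" using b_anti[OF b_decr] by blast
  have b2p: "0 < b 2" using b_pos[rule_format, of 2] by simp
  have b2: "b 2 < b 1" using b_decr by (metis one_le_numeral numeral_2_eq_2 One_nat_def le_numeral_extra(4))
  have fnn: "0 \<le> fcontr b c gam N g' j w" if "w \<in> N" for w
  proof -
    have "joined N g' j w \<Longrightarrow> w \<noteq> j \<Longrightarrow> 0 < b (gdist N g' j w)" using gdist_ge1 b_pos by blast
    moreover have "0 < b 2" using b_pos by simp
    moreover have "c \<le> b 1" using hc \<open>0 < b 2\<close> by linarith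
    ultimately show ?thesis unfolding fcontr_def using gam by auto
  qed
  have fle: "fcontr b c gam N g j w \<le> fcontr b c gam N g' j w" if w: "w \<in> N" "w \<noteq> k" for w
  proof (cases "w = j \<or> adj g j w \<or> \<not> joined N g j w")
    case True
    then consider "w = j" | "w \<noteq> j" "adj g j w" | "w \<noteq> j" "\<not> adj g j w" "\<not> joined N g j w" by blast
    then show ?thesis
    proof cases
      case 1 then show ?thesis unfolding fcontr_def by simp
    next
      case 2 then show ?thesis using adjg'[OF w(2)] unfolding fcontr_def by simp
    next
      case 3
      then have "fcontr b c gam N g j w = 0" unfolding fcontr_def by simp
      then show ?thesis using fnn[OF w(1)] by simp
    qed
  next
    case False
    then have nw: "w \<noteq> j" "\<not> adj g j w" "joined N g j w" by auto
    have jn: "joined N g' j w" using joined_mono[OF nw(3) am] .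
    have dle: "gdist N g' j w \<le> gdist N g j w" using gdist_mono[OF nw(3) am] .
    have d1: "1 \<le> gdist N g' j w" using gdist_ge1[OF jn nw(1)[symmetric]] .
    have bb: "b (gdist N g j w) \<le> b (gdist N g' j w)" using banti[OF d1 dle] .
    have es: "ess_set N g' j w \<subseteq> ess_set N g j w" using ess_mono[OF am] .
    have bp: "0 < b (gdist N g' j w)" using b_pos d1 by auto
    have "(1 - gam) * b (gdist N g j w) \<le> (1 - gam) * b (gdist N g' j w)"
      using bb gam by (intro mult_left_mono) auto
    moreover have "(1 - gam) * b (gdist N g' j w) \<le> b (gdist N g' j w)" using gam bp by simp
    ultimately show ?thesis using nw jn adjg'[OF w(2)] es bb unfolding fcontr_def by auto
  qed
  have fk: "fcontr b c gam N g j k < fcontr b c gam N g' j k"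
  proof -
    have "fcontr b c gam N g j k \<le> b 2"
    proof (cases "joined N g j k")
      case True
      have d2: "2 \<le> gdist N g j k" using gdist_ge2[OF True N(4,5)] .
      have "b (gdist N g j k) \<le> b 2" using banti[OF _ d2] by simp
      moreover have "0 < b (gdist N g j k)" using b_pos d2 by auto
      ultimately show ?thesis using True N gam unfolding fcontr_def
        by (auto intro: order_trans[of _ "b (gdist N g j k)"])
    next
      case False then show ?thesis using N b2p unfolding fcontr_def by auto
    qed
    moreover have "fcontr b c gam N g' j k = b 1 - c" using adjk N unfolding fcontr_def by auto
    ultimately show ?thesis using hc by simp
  qed
  have S: "(\<Sum>w\<in>N. fcontr b c gam N g j w) < (\<Sum>w\<in>N. fcontr b c gam N g' j w)"
  proof (rule sum_strict_mono_ex1[OF N(1)])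
    show "\<forall>w\<in>N. fcontr b c gam N g j w \<le> fcontr b c gam N g' j w"
      using fle fk by (metis less_imp_le)
    show "\<exists>w\<in>N. fcontr b c gam N g j w < fcontr b c gam N g' j w" using fk N(3) by blast
  qed
  define P where "P h = {(y, z). y \<in> N \<and> z \<in> N \<and> y < z \<and> joined N h y z \<and> j \<in> ess_set N h y z}" for h
  define t where "t h = (\<lambda>(y, z). gam / real (card (ess_set N h y z)) * 2 * b (gdist N h y z))" for h
  have PP: "P g \<subseteq> P g'" unfolding P_def g'_def using joined_mono[OF _ am] ess_keep
    unfolding g'_def by auto
  have finP: "finite (P g')" unfolding P_def by (rule finite_subset[of _ "N \<times> N"]) (use N in auto)
  have tnn: "0 \<le> t g' p" if "p \<in> P g'" for p
  proof -
    obtain y z where p: "p = (y, z)" by (cases p)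
    with that have "joined N g' y z" "y \<noteq> z" unfolding P_def by auto
    then have "0 < b (gdist N g' y z)" using gdist_ge1 b_pos by blast
    then show ?thesis unfolding t_def p using gam by simp
  qed
  have tle: "t g p \<le> t g' p" if "p \<in> P g" for p
  proof -
    obtain y z where p: "p = (y, z)" by (cases p)
    with that have yz: "joined N g y z" "y \<noteq> z" "j \<in> ess_set N g y z" unfolding P_def by auto
    have jn: "joined N g' y z" using joined_mono[OF yz(1) am] .
    have d1: "1 \<le> gdist N g' y z" using gdist_ge1[OF jn yz(2)] .
    have bb: "b (gdist N g y z) \<le> b (gdist N g' y z)" using banti[OF d1 gdist_mono[OF yz(1) am]] .
    have bp: "0 < b (gdist N g y z)" using gdist_ge1[OF yz(1,2)] b_pos by auto
    have e1: "j \<in> ess_set N g' y z" using ess_keep[OF yz(3)] unfolding g'_def .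
    have cpos: "0 < card (ess_set N g' y z)" using e1 ess_finite[OF N(1)] card_gt_0_iff by blast
    have cle: "card (ess_set N g' y z) \<le> card (ess_set N g y z)"
      using card_mono[OF ess_finite[OF N(1)] ess_mono[OF am]] .
    have "gam / real (card (ess_set N g y z)) \<le> gam / real (card (ess_set N g' y z))"
      using cpos cle gam by (intro divide_left_mono) auto
    moreover have "0 \<le> gam / real (card (ess_set N g' y z))" using gam by simp
    ultimately have "gam / real (card (ess_set N g y z)) * 2 * b (gdist N g y z)
        \<le> gam / real (card (ess_set N g' y z)) * 2 * b (gdist N g' y z)"
      using bb bp gam by (intro mult_mono) auto
    then show ?thesis unfolding t_def p by simp
  qed
  have "sum (t g) (P g) \<le> sum (t g') (P g)" using tle by (rule sum_mono)
  also have "\<dots> \<le> sum (t g') (P g')" using finP PP tnn by (intro sum_mono2) auto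
  finally have C: "Cterm b gam N g j \<le> Cterm b gam N g' j" unfolding Cterm_def P_def t_def .
  show ?thesis using S C util_split[OF N(1,2)] unfolding g'_def by simp
qed

lemma edges_inv:
  assumes "(step b c gam c0)\<^sup>*\<^sup>* (1, {}) (n, g)"
  shows "\<forall>e\<in>g. \<exists>x y. e = {x, y} \<and> x < n \<and> y < n \<and> x \<noteq> y"
  using assms
proof (induction "(n, g)" arbitrary: n g rule: rtranclp_induct)
  case base then show ?case by simp
next
  case (step s n g)
  obtain n0 g0 where s: "s = (n0, g0)" by (cases s)
  have IH: "\<forall>e\<in>g0. \<exists>x y. e = {x, y} \<and> x < n0 \<and> y < n0 \<and> x \<noteq> y" using step.hyps(3)[OF s] .
  from step.hyps(2)[unfolded s] show ?case
  proof cases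
    case (entry T)
    show ?thesis
    proof
      fix e assume "e \<in> g"
      then have "e = {n0, T} \<or> e \<in> g0" using entry by simp
      then show "\<exists>x y. e = {x, y} \<and> x < n \<and> y < n \<and> x \<noteq> y"
      proof
        assume "e = {n0, T}" then show ?thesis using entry by (intro exI[of _ n0] exI[of _ T]) simp
      next
        assume "e \<in> g0" then obtain x y where "e = {x, y}" "x < n0" "y < n0" "x \<noteq> y" using IH by blast
        then show ?thesis using entry by (intro exI[of _ x] exI[of _ y]) simp
      qed
    qed
  next
    case (move i)
    have "g \<in> options b c gam {..<n0} g0 i" using move by simp
    then consider k where "g = insert {i, k} g0" "k < n0" "k \<noteq> i"
      | k where "g = g0 - {{i, k}}" | "g = g0" unfolding options_def by blast
    then show ?thesis
    proof cases
      case 1 then show ?thesis using IH move by blast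
    next
      case 2 then show ?thesis using IH move by blast
    next
      case 3 then show ?thesis using IH move by blast
    qed
  qed
qed

theorem theorem2:
  fixes b :: "nat \<Rightarrow> real" and c gam c0 :: real and n :: nat and g :: "nat set set"
  assumes b_decr: "\<forall>i\<ge>1. b (Suc i) < b i"
    and b_pos: "\<forall>i\<ge>1. 0 < b i"
    and gam: "0 \<le> gam" "gam < 1"
    and hc: "c < b 1 - b 2"
    and hc0: "c0 \<le> (1 - gam) * b 2"
    and reach: "(step b c gam c0)\<^sup>*\<^sup>* (1, {}) (n, g)"
    and stable: "pairwise_stable b c gam {..<n} g"
  shows "g = complete_graph n"
proof
  show "g \<subseteq> complete_graph n" using edges_inv[OF reach] unfolding complete_graph_def by blast
next
  show "complete_graph n \<subseteq> g"
  proof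
    fix e assume "e \<in> complete_graph n"
    then obtain x y where e: "e = {x, y}" "x < n" "y < n" "x \<noteq> y" unfolding complete_graph_def by blast
    show "e \<in> g"
    proof (rule ccontr)
      assume "e \<notin> g"
      then have na: "\<not> adj g x y" unfolding adj_def e by simp
      have 1: "util b c gam {..<n} g x < util b c gam {..<n} (insert {x, y} g) x"
        using add_increase[OF b_decr b_pos gam hc _ _ _ e(4) na] e by simp
      have na': "\<not> adj g y x" using na adj_sym by metis
      have "util b c gam {..<n} g y < util b c gam {..<n} (insert {y, x} g) y"
        using add_increase[OF b_decr b_pos gam hc _ _ _ e(4)[symmetric] na'] e by simp
      then have 2: "util b c gam {..<n} g y < util b c gam {..<n} (insert {x, y} g) y"
        by (simp add: insert_commute)
      from stable have "util b c gam {..<n} (insert {x, y} g) x > util b c gam {..<n} g x \<longrightarrow>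
          util b c gam {..<n} (insert {x, y} g) y < util b c gam {..<n} g y"
        unfolding pairwise_stable_def using e na by blast
      with 1 2 show False by simp
    qed
  qed
qed

end
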